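(* Let $V$ be a neighborhood of $0$ in $\mathbb{C}$. Let $h$ be meromorphic in $V$, let $B$ be holomorphic and zero-free in $V\setminus\{0\}$ with $|B(z)|=1$ for all $z\in (V\cap\mathbb{R})\setminus\{0\}$, and let $\phi$ be a univalent holomorphic function on $\{z\in V:\operatorname{Im} z>0\}$ satisfying $\phi'=Bh$ there. Then the singularity of $B$ at $0$ is removable. *)

theory Defs
  imports "HOL-Complex_Analysis.Complex_Analysis"
begin

end

theory Submission
  imports Defs
begin

lemma univ_omit:
  fixes f :: "complex \<Rightarrow> complex"
  assumes holf: "f holomorphic_on ball 0 1" and inj: "inj_on f (ball 0 1)"
    and f0: "f 0 = 0" and df0: "deriv f 0 = 1"
  shows "\<exists>w. w \<notin> f ` ball 0 1 \<and> norm w \<le> 2"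
proof (rule ccontr)
  assume "\<not> ?thesis"
  hence sub: "cball 0 2 \<subseteq> f ` ball 0 1" by (auto simp: not_le)
  obtain g where g: "g holomorphic_on f ` ball 0 1"
    "\<And>z. z\<in>ball 0 1 \<Longrightarrow> deriv f z * deriv g (f z) = 1"
    "\<And>z. z\<in>ball 0 1 \<Longrightarrow> g (f z) = z"
    using holomorphic_has_inverse[OF holf open_ball inj] by blast
  have dg: "deriv g 0 = 1" using g(2)[of 0] f0 df0 by simp
  have hb: "g holomorphic_on ball 0 2"
    using g(1) sub by (meson ball_subset_cball holomorphic_on_subset order_trans)
  have "norm ((deriv ^^ 1) g 0) \<le> fact 1 * 1 / (3/2)^1"
  proof (rule Cauchy_inequality)
    show "g holomorphic_on ball 0 (3/2)"
      using hb by (rule holomorphic_on_subset) auto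
    show "continuous_on (cball 0 (3/2)) g"
      using hb by (intro holomorphic_on_imp_continuous_on holomorphic_on_subset[OF hb]) auto
    fix x :: complex assume "norm (0 - x) = 3/2"
    hence "x \<in> f ` ball 0 1" using sub by auto
    then obtain z where "z \<in> ball 0 1" "x = f z" by auto
    thus "norm (g x) \<le> 1" using g(3) by auto
  qed auto
  thus False using dg by simp
qed

definition schottky_const :: real where
  "schottky_const = exp(pi * exp(pi * (2 + 2 * 1 + 12 * (2/3) / (1 - 2/3))))"

lemma univ_bound_norm:
  fixes f :: "complex \<Rightarrow> complex"
  assumes holf: "f holomorphic_on ball 0 1" and inj: "inj_on f (ball 0 1)"
    and f0: "f 0 = 0" and df0: "deriv f 0 = 1"
  shows "norm (deriv (deriv f) 0) \<le> 16 * (1 + schottky_const^2)"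
proof -
  obtain w0 where w0: "w0 \<notin> f ` ball 0 1" "norm w0 \<le> 2"
    using univ_omit[OF assms] by blast
  have w0nz: "w0 \<noteq> 0" using w0 f0 by force
  define Q where "Q = (\<lambda>u. 1 - f u / w0)"
  have Qhol: "Q holomorphic_on ball 0 1" unfolding Q_def by (intro holomorphic_intros holf) (use w0nz in auto)
  have Qnz: "Q u \<noteq> 0" if "u \<in> ball 0 1" for u
  proof
    assume "Q u = 0"
    hence "f u = w0" using w0nz by (simp add: Q_def field_simps)
    thus False using w0 that by auto
  qed
  obtain G0 where G0: "G0 holomorphic_on ball 0 1" "\<And>u. u \<in> ball 0 1 \<Longrightarrow> Q u = G0 u ^ 2"
    using contractible_imp_holomorphic_sqrt[OF Qhol convex_imp_contractible[OF convex_ball] Qnz] by blast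
  have G00: "G0 0 ^ 2 = 1" using G0(2)[of 0] by (simp add: Q_def f0)
  define G where "G = (\<lambda>u. G0 0 * G0 u)"
  have Ghol: "G holomorphic_on ball 0 1" unfolding G_def by (intro holomorphic_intros G0)
  have GQ: "Q u = G u ^ 2" if "u \<in> ball 0 1" for u
    using G0(2)[OF that] G00 by (simp add: G_def power_mult_distrib)
  have G0one: "G 0 = 1" using G00 by (simp add: G_def power2_eq_square)
  have Gnz: "G u \<noteq> 0" if "u \<in> ball 0 1" for u using GQ[OF that] Qnz[OF that] by auto
  have Gnm1: "G u \<noteq> -1" if "u \<in> ball 0 1" for u
  proof
    assume "G u = -1"
    hence "Q u = 1" using GQ[OF that] by simp
    hence "f u = 0" using w0nz by (simp add: Q_def)
    hence "u = 0" using inj_onD[OF inj, of u 0] f0 that by auto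
    thus False using \<open>G u = -1\<close> G0one by simp
  qed
  define k where "k = (\<lambda>u. - G (u * (3/4)))"
  have kmap: "u * (3/4) \<in> ball 0 1" if "u \<in> cball 0 1" for u :: complex
    using that by (simp add: norm_mult)
  have khol: "k holomorphic_on cball 0 1"
    unfolding k_def
    by (intro holomorphic_intros holomorphic_on_compose_gen[OF _ Ghol, unfolded o_def]) (use kmap in auto)
  have Gbound: "norm (G v) \<le> schottky_const" if "norm v \<le> 1/2" for v
  proof -
    have "norm (k (v * (4/3))) \<le> schottky_const"
      unfolding schottky_const_def
    proof (rule Schottky[OF khol])
      show "norm (k 0) \<le> 1" by (simp add: k_def G0one)
      show "\<not> (k z = 0 \<or> k z = 1)" if "z \<in> cball 0 1" for z
        using Gnz[OF kmap[OF that]] Gnm1[OF kmap[OF that]] by (auto simp: k_def minus_equation_iff[of _ 1])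
      show "norm (v * (4/3)) \<le> 2/3" using that by (simp add: norm_mult)
    qed auto
    thus ?thesis by (simp add: k_def)
  qed
  have fbound: "norm (f v) \<le> 2 * (1 + schottky_const^2)" if "norm v \<le> 1/2" for v
  proof -
    have v: "v \<in> ball 0 1" using that by simp
    have "f v = w0 * (1 - G v ^ 2)"
      using GQ[OF v] w0nz by (simp add: Q_def field_simps)
    hence "norm (f v) = norm w0 * norm (1 - G v ^ 2)" by (simp add: norm_mult)
    also have "\<dots> \<le> 2 * (1 + schottky_const^2)"
    proof (rule mult_mono)
      have "norm (1 - G v ^ 2) \<le> 1 + norm (G v) ^ 2"
        by (metis norm_one norm_power norm_triangle_ineq4)
      also have "\<dots> \<le> 1 + schottky_const^2"
        using Gbound[OF that] by (simp add: power_mono)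
      finally show "norm (1 - G v ^ 2) \<le> 1 + schottky_const^2" .
    qed (use w0 in auto)
    finally show ?thesis .
  qed
  have "norm ((deriv ^^ 2) f 0) \<le> fact 2 * (2 * (1 + schottky_const^2)) / (1/2)^2"
  proof (rule Cauchy_inequality)
    show "f holomorphic_on ball 0 (1/2)" by (rule holomorphic_on_subset[OF holf]) auto
    show "continuous_on (cball 0 (1/2)) f"
      by (intro holomorphic_on_imp_continuous_on holomorphic_on_subset[OF holf]) auto
    fix x :: complex assume "norm (0 - x) = 1/2"
    thus "norm (f x) \<le> 2 * (1 + schottky_const^2)" by (intro fbound) simp
  qed auto
  thus ?thesis by (simp add: numeral_2_eq_2)
qed

definition UC :: real where "UC = 16 * (1 + schottky_const^2)"

lemma UC_pos: "UC > 0" unfolding UC_def by (simp add: add_pos_nonneg)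

lemma univ_preschwarz:
  fixes \<phi> :: "complex \<Rightarrow> complex"
  assumes holp: "\<phi> holomorphic_on ball z d" and inj: "inj_on \<phi> (ball z d)" and d: "d > 0"
  shows "norm (deriv (deriv \<phi>) z) \<le> UC / d * norm (deriv \<phi> z)"
proof -
  define c where "c = deriv \<phi> z"
  have cnz: "c \<noteq> 0" unfolding c_def
    using holomorphic_injective_imp_regular[OF holp open_ball inj] d by simp
  define f where "f = (\<lambda>u. (\<phi> (z + of_real d * u) - \<phi> z) / (of_real d * c))"
  have map: "z + of_real d * u \<in> ball z d" if "u \<in> ball 0 1" for u
    using that d by (simp add: dist_norm norm_mult)
  have dphi: "(\<phi> has_field_derivative deriv \<phi> w) (at w)" if "w \<in> ball z d" for w
    using holomorphic_derivI[OF holp open_ball that] .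
  have df: "(f has_field_derivative deriv \<phi> (z + of_real d * u) / c) (at u)" if "u \<in> ball 0 1" for u
  proof -
    have "((\<lambda>u. \<phi> (z + of_real d * u)) has_field_derivative deriv \<phi> (z + of_real d * u) * of_real d) (at u)"
      by (rule DERIV_chain2[where g="\<lambda>u. z + of_real d * u", OF dphi[OF map[OF that]]]) (auto intro!: derivative_eq_intros)
    hence "(f has_field_derivative (deriv \<phi> (z + of_real d * u) * of_real d - 0) / (of_real d * c)) (at u)"
      unfolding f_def by (intro DERIV_cdivide DERIV_diff DERIV_const)
    thus ?thesis using d by (simp add: field_simps)
  qed
  have fhol: "f holomorphic_on ball 0 1"
    using df by (auto simp: holomorphic_on_def field_differentiable_def at_within_open[OF _ open_ball])
      (metis at_within_open field_differentiable_def field_differentiable_within_subset open_ball subset_UNIV)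
  have finj: "inj_on f (ball 0 1)"
  proof (rule inj_onI)
    fix u v assume uv: "u \<in> ball 0 1" "v \<in> ball 0 1" "f u = f v"
    hence "\<phi> (z + of_real d * u) = \<phi> (z + of_real d * v)"
      using cnz d by (simp add: f_def divide_cancel_right)
    hence "z + of_real d * u = z + of_real d * v" using inj_onD[OF inj] map uv by blast
    thus "u = v" using d by simp
  qed
  have f0: "f 0 = 0" by (simp add: f_def)
  have dfeq: "deriv f u = deriv \<phi> (z + of_real d * u) / c" if "u \<in> ball 0 1" for u
    using DERIV_imp_deriv[OF df[OF that]] .
  have df0: "deriv f 0 = 1" using dfeq[of 0] cnz by (simp add: c_def)
  have ev: "eventually (\<lambda>u. deriv f u = deriv \<phi> (z + of_real d * u) / c) (nhds 0)"
  proof -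
    have "eventually (\<lambda>u. u \<in> ball (0::complex) 1) (nhds 0)" by (intro eventually_nhds_in_open) auto
    thus ?thesis by (rule eventually_mono) (use dfeq in auto)
  qed
  have "deriv (deriv f) 0 = deriv (\<lambda>u. deriv \<phi> (z + of_real d * u) / c) 0"
    by (rule deriv_cong_ev[OF ev refl])
  also have "\<dots> = deriv (deriv \<phi>) z * of_real d / c"
  proof (rule DERIV_imp_deriv)
    have h2: "deriv \<phi> holomorphic_on ball z d" by (intro holomorphic_deriv holp open_ball)
    have "(deriv \<phi> has_field_derivative deriv (deriv \<phi>) z) (at z)"
      using holomorphic_derivI[OF h2 open_ball] d by simp
    hence "((\<lambda>u. deriv \<phi> (z + of_real d * u)) has_field_derivative deriv (deriv \<phi>) z * of_real d) (at 0)"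
      by (intro DERIV_chain2[where f="deriv \<phi>" and g="\<lambda>u. z + of_real d * u"]) (auto intro!: derivative_eq_intros)
    thus "((\<lambda>u. deriv \<phi> (z + of_real d * u) / c) has_field_derivative deriv (deriv \<phi>) z * of_real d / c) (at 0)"
      by (intro DERIV_cdivide)
  qed
  finally have "norm (deriv (deriv \<phi>) z * of_real d / c) \<le> UC"
    using univ_bound_norm[OF fhol finj f0 df0] by (simp add: UC_def)
  hence "norm (deriv (deriv \<phi>) z) * d \<le> UC * norm c"
    using d cnz by (simp add: norm_mult norm_divide field_simps)
  thus ?thesis using d by (simp add: field_simps c_def)
qed

lemma circ_identity:
  fixes \<zeta> :: complex and x0 \<rho> :: real
  assumes "norm (\<zeta> - of_real x0) = \<rho>"
  shows "norm ((\<zeta> - of_real x0)^2 - (of_real \<rho>)^2) = 2 * \<rho> * \<bar>Im \<zeta>\<bar>"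
proof -
  define w where "w = \<zeta> - of_real x0"
  have nw: "norm w = \<rho>" using assms by (simp add: w_def)
  have "(of_real \<rho>)^2 = w * cnj w" using complex_norm_square[of w] by (simp add: nw)
  hence "(\<zeta> - of_real x0)^2 - (of_real \<rho>)^2 = w * (w - cnj w)" by (simp add: w_def power2_eq_square algebra_simps)
  also have "w - cnj w = 2 * \<i> * of_real (Im w)" by (simp add: complex_diff_cnj)
  finally have "norm ((\<zeta> - of_real x0)^2 - (of_real \<rho>)^2) = norm w * (2 * \<bar>Im w\<bar>)"
    by (simp add: norm_mult)
  thus ?thesis using assms by (simp add: w_def)
qed

lemma kernel_bound:
  fixes F :: "complex \<Rightarrow> complex"
  assumes Fhol: "F holomorphic_on (ball 0 R - {0})"
    and bnd: "\<And>\<zeta>. \<zeta> \<in> ball 0 R - {0} \<Longrightarrow> Im \<zeta> \<noteq> 0 \<Longrightarrow> norm (F \<zeta>) \<le> A / \<bar>Im \<zeta>\<bar> + K1 / norm \<zeta>"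
    and A: "A \<ge> 0" and K1: "K1 \<ge> 0"
    and z: "z \<noteq> 0" "norm z \<le> R/2"
  shows "norm (F z) \<le> 15 * (A + K1) / norm z"
proof (cases "\<bar>Im z\<bar> \<le> \<bar>Re z\<bar> / 4")
  case False
  have nz: "norm z > 0" using z by simp
  have "norm z \<le> \<bar>Re z\<bar> + \<bar>Im z\<bar>" by (rule cmod_le)
  hence lt: "norm z \<le> 5 * \<bar>Im z\<bar>" using False by linarith
  hence imz: "Im z \<noteq> 0" using nz by auto
  have "norm z < R" using z(2) nz by linarith
  hence zin: "z \<in> ball 0 R - {0}" using z by auto
  have "A / \<bar>Im z\<bar> \<le> 5 * A / norm z"
    using lt A nz imz by (simp add: field_simps mult_left_mono)
  hence "norm (F z) \<le> 5 * A / norm z + K1 / norm z" using bnd[OF zin imz] by linarith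
  also have "\<dots> \<le> 15 * (A + K1) / norm z"
    using nz A K1 by (simp add: divide_right_mono add_divide_distrib[symmetric])
  finally show ?thesis .
next
  case True
  define x0 where "x0 = Re z"
  define \<rho> where "\<rho> = \<bar>x0\<bar> / 2"
  have nz: "norm z > 0" using z by simp
  have "norm z \<le> \<bar>Re z\<bar> + \<bar>Im z\<bar>" by (rule cmod_le)
  hence zx: "norm z \<le> 5/4 * \<bar>x0\<bar>" using True by (simp add: x0_def)
  have x0nz: "x0 \<noteq> 0" using zx nz by auto
  have rho: "\<rho> > 0" using x0nz by (simp add: \<rho>_def)
  have x0z: "\<bar>x0\<bar> \<le> norm z" by (simp add: x0_def abs_Re_le_cmod)
  have zc: "norm (z - of_real x0) = \<bar>Im z\<bar>"
    by (simp add: x0_def cmod_def complex_diff)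
  have zc2: "\<bar>Im z\<bar> \<le> \<rho> / 2" using True by (simp add: \<rho>_def x0_def)
  define \<Phi> where "\<Phi> = (\<lambda>\<zeta>. F \<zeta> * ((\<zeta> - of_real x0)^2 - (of_real \<rho>)^2))"
  have csub: "cball (complex_of_real x0) \<rho> \<subseteq> ball 0 R - {0}"
  proof
    fix \<zeta> :: complex assume "\<zeta> \<in> cball (complex_of_real x0) \<rho>"
    hence d: "norm (\<zeta> - of_real x0) \<le> \<rho>" by (simp add: dist_norm norm_minus_commute)
    have "norm \<zeta> \<le> norm (of_real x0 :: complex) + norm (\<zeta> - of_real x0)" by (rule norm_triangle_sub)
    hence "norm \<zeta> \<le> 3/2 * \<bar>x0\<bar>" using d by (simp add: \<rho>_def)
    hence "norm \<zeta> < R" using x0z z x0nz by linarith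
    moreover have "norm (of_real x0 :: complex) \<le> norm \<zeta> + norm (\<zeta> - of_real x0)"
      using norm_triangle_sub[of "complex_of_real x0" \<zeta>] by (simp add: norm_minus_commute)
    hence "norm \<zeta> \<ge> \<rho>" using d by (simp add: \<rho>_def)
    ultimately show "\<zeta> \<in> ball 0 R - {0}" using rho by auto
  qed
  have Phol: "\<Phi> holomorphic_on cball (complex_of_real x0) \<rho>"
    unfolding \<Phi>_def by (intro holomorphic_intros holomorphic_on_subset[OF Fhol csub])
  have int: "((\<lambda>u. \<Phi> u / (u - z)) has_contour_integral (2 * of_real pi * \<i> * \<Phi> z)) (circlepath (of_real x0) \<rho>)"
    by (rule Cauchy_integral_circlepath)
       (use Phol zc zc2 rho in \<open>auto intro: holomorphic_on_imp_continuous_on holomorphic_on_subset\<close>)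
  have M: "norm (\<Phi> u / (u - z)) \<le> 4 * (A + K1)" if u: "norm (u - of_real x0) = \<rho>" for u
  proof -
    have "u \<in> cball (complex_of_real x0) \<rho>" using u by (simp add: dist_norm norm_minus_commute)
    hence uin: "u \<in> ball 0 R - {0}" using csub by blast
    have "\<rho> \<le> norm (u - z) + norm (z - of_real x0)"
      using u norm_triangle_ineq[of "u - z" "z - complex_of_real x0"] by simp
    hence uz: "norm (u - z) \<ge> \<rho> / 2" using zc zc2 by linarith
    have Pu: "norm ((u - of_real x0)^2 - (of_real \<rho>)^2) = 2 * \<rho> * \<bar>Im u\<bar>"
      by (rule circ_identity[OF u])
    have "norm (\<Phi> u) \<le> 2 * \<rho> * (A + K1)"
    proof (cases "Im u = 0")
      case True thus ?thesis using Pu rho A K1 by (simp add: \<Phi>_def norm_mult)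
    next
      case False
      have nu: "norm u > 0" using uin by auto
      have imu: "\<bar>Im u\<bar> \<le> norm u" by (rule abs_Im_le_cmod)
      have "norm (\<Phi> u) = norm (F u) * (2 * \<rho> * \<bar>Im u\<bar>)" by (simp add: \<Phi>_def norm_mult Pu)
      also have "\<dots> \<le> (A / \<bar>Im u\<bar> + K1 / norm u) * (2 * \<rho> * \<bar>Im u\<bar>)"
        using bnd[OF uin False] rho by (intro mult_right_mono) auto
      also have "\<dots> = 2 * \<rho> * (A + K1 * (\<bar>Im u\<bar> / norm u))"
        using False nu by (simp add: field_simps)
      also have "\<dots> \<le> 2 * \<rho> * (A + K1)"
        using imu nu K1 rho by (intro mult_left_mono add_left_mono) (auto simp: field_simps mult_left_le intro!: mult_left_mono)
      finally show ?thesis .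
    qed
    hence "norm (\<Phi> u / (u - z)) \<le> 2 * \<rho> * (A + K1) / (\<rho> / 2)"
      unfolding norm_divide using uz rho A K1 by (intro frac_le) auto
    also have "\<dots> = 4 * (A + K1)" using rho by (simp add: field_simps)
    finally show ?thesis .
  qed
  have "norm (2 * of_real pi * \<i> * \<Phi> z) \<le> 4 * (A + K1) * (2 * pi * \<rho>)"
    by (rule has_contour_integral_bound_circlepath[OF int _ rho M]) (use A K1 in auto)
  hence PZ: "norm (\<Phi> z) \<le> 4 * (A + K1) * \<rho>" by (simp add: norm_mult)
  have "norm ((z - of_real x0)^2 - (of_real \<rho>)^2) \<ge> \<rho>^2"
  proof -
    have "(z - of_real x0) = \<i> * of_real (Im z)" by (simp add: x0_def complex_eq_iff)
    hence "(z - of_real x0)^2 - (of_real \<rho>)^2 = - of_real ((Im z)^2 + \<rho>^2)"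
      by (simp add: power_mult_distrib)
    hence "norm ((z - of_real x0)^2 - (of_real \<rho>)^2) = (Im z)^2 + \<rho>^2"
      by (simp only: norm_minus_cancel norm_of_real) (simp add: add_nonneg_nonneg)
    thus ?thesis by simp
  qed
  hence "norm (F z) * \<rho>^2 \<le> norm (\<Phi> z)"
    by (simp add: \<Phi>_def norm_mult mult_left_mono)
  hence "norm (F z) * \<rho>^2 \<le> 4 * (A + K1) * \<rho>" using PZ by linarith
  hence "(norm (F z) * \<rho>) * \<rho> \<le> (4 * (A + K1)) * \<rho>" by (simp add: power2_eq_square algebra_simps)
  hence "norm (F z) * \<rho> \<le> 4 * (A + K1)" using rho by (rule mult_right_le_imp_le)
  hence "norm (F z) \<le> 4 * (A + K1) / \<rho>" using rho by (simp add: pos_le_divide_eq)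
  also have "\<dots> = 8 * (A + K1) / \<bar>x0\<bar>" by (simp add: \<rho>_def)
  also have "\<dots> \<le> 8 * (A + K1) / (4/5 * norm z)"
    using zx nz A K1 x0nz by (intro divide_left_mono) auto
  also have "\<dots> \<le> 15 * (A + K1) / norm z"
    using nz A K1 by (simp add: field_simps)
  finally show ?thesis .
qed

lemma arc_log_bound:
  fixes B :: "complex \<Rightarrow> complex"
  assumes W: "convex W" "open W" and Bhol: "B holomorphic_on W" and Bnz: "\<And>w. w \<in> W \<Longrightarrow> B w \<noteq> 0"
    and rho: "0 < \<rho>" and st: "s \<le> t"
    and img: "path_image (part_circlepath 0 \<rho> s t) \<subseteq> W"
    and M: "\<And>w. w \<in> path_image (part_circlepath 0 \<rho> s t) \<Longrightarrow> norm (deriv B w / B w) \<le> M"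
    and M0: "M \<ge> 0"
  shows "\<bar>ln (norm (B (\<rho> * exp (\<i> * t)))) - ln (norm (B (\<rho> * exp (\<i> * s))))\<bar> \<le> M * \<rho> * (t - s)"
proof -
  obtain L where L: "L holomorphic_on W" "\<And>w. w \<in> W \<Longrightarrow> B w = exp (L w)"
    using contractible_imp_holomorphic_log[OF Bhol convex_imp_contractible[OF W(1)] Bnz] by blast
  have dL: "(L has_field_derivative deriv B w / B w) (at w within W)" if w: "w \<in> W" for w
  proof -
    have dl: "(L has_field_derivative deriv L w) (at w)" using holomorphic_derivI[OF L(1) W(2) w] .
    have "((\<lambda>w. exp (L w)) has_field_derivative exp (L w) * deriv L w) (at w)"
      by (rule derivative_eq_intros dl | simp)+
    hence "(B has_field_derivative exp (L w) * deriv L w) (at w)"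
      by (rule has_field_derivative_transform_within_open[OF _ W(2) w]) (use L(2) in auto)
    hence "deriv B w = exp (L w) * deriv L w" by (rule DERIV_imp_deriv)
    hence "deriv L w = deriv B w / B w" using L(2)[OF w] by simp
    thus ?thesis using dl by (simp add: has_field_derivative_at_within)
  qed
  have int: "((\<lambda>w. deriv B w / B w) has_contour_integral
         (L (pathfinish (part_circlepath 0 \<rho> s t)) - L (pathstart (part_circlepath 0 \<rho> s t)))) (part_circlepath 0 \<rho> s t)"
    by (rule contour_integral_primitive[OF dL valid_path_part_circlepath img])
  have "norm (L (pathfinish (part_circlepath 0 \<rho> s t)) - L (pathstart (part_circlepath 0 \<rho> s t))) \<le> M * \<rho> * (t - s)"
    by (rule has_contour_integral_bound_part_circlepath[OF int M0 rho st M])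
  moreover have ps: "pathstart (part_circlepath 0 \<rho> s t) \<in> W" "pathfinish (part_circlepath 0 \<rho> s t) \<in> W"
    using img pathstart_in_path_image pathfinish_in_path_image by blast+
  moreover have "ln (norm (B w)) = Re (L w)" if "w \<in> W" for w using L(2)[OF that] by simp
  ultimately show ?thesis using abs_Re_le_cmod[of "L (pathfinish (part_circlepath 0 \<rho> s t)) - L (pathstart (part_circlepath 0 \<rho> s t))"]
    by simp
qed

lemma arc_in_halfplane:
  fixes \<rho> s t R :: real
  assumes rho: "0 < \<rho>" "\<rho> < R" and st: "s \<le> t" "t - s < pi"
  shows "path_image (part_circlepath 0 \<rho> s t) \<subseteq> ball 0 R \<inter> {w. inner (exp (\<i> * of_real ((s+t)/2))) w > 0}"
proof
  fix w assume "w \<in> path_image (part_circlepath 0 \<rho> s t)"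
  then obtain x where x: "w = \<rho> * exp (\<i> * of_real x)" "s \<le> x" "x \<le> t"
    using path_image_part_circlepath[OF st(1)] by auto
  have "norm w = \<rho>" using x rho by (simp add: norm_mult)
  moreover have "inner (exp (\<i> * of_real ((s+t)/2))) w = \<rho> * cos (x - (s+t)/2)"
    unfolding x(1) by (simp only: cis_conv_exp[symmetric]) (simp add: inner_complex_def cos_diff algebra_simps)
  moreover have "cos (x - (s+t)/2) > 0"
    by (rule cos_gt_zero_pi) (use x st in \<open>auto simp: field_simps\<close>)
  ultimately show "w \<in> ball 0 R \<inter> {w. inner (exp (\<i> * of_real ((s+t)/2))) w > 0}"
    using rho by auto
qed

lemma bounded_from_logderiv:
  fixes B :: "complex \<Rightarrow> complex"
  assumes R: "R > 0" and Bhol: "B holomorphic_on ball 0 R - {0}"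
    and Bnz: "\<And>z. z \<in> ball 0 R - {0} \<Longrightarrow> B z \<noteq> 0"
    and Breal: "\<And>x. x \<in> ball 0 R - {0} \<Longrightarrow> x \<in> \<real> \<Longrightarrow> norm (B x) = 1"
    and K: "\<And>z. z \<in> ball 0 R - {0} \<Longrightarrow> norm (deriv B z / B z) \<le> K / norm z" and K0: "K \<ge> 0"
    and z: "z \<in> ball 0 R - {0}"
  shows "norm (B z) \<le> exp (K * pi)"
proof -
  define \<rho> where "\<rho> = norm z"
  have rho: "0 < \<rho>" "\<rho> < R" using z by (auto simp: \<rho>_def)
  define \<theta> where "\<theta> = Arg z"
  have zeq: "z = \<rho> * exp (\<i> * \<theta>)" using Arg_eq[of z] z by (simp add: \<rho>_def \<theta>_def)
  have main: "\<bar>ln (norm (B (\<rho> * exp (\<i> * t)))) - ln (norm (B (\<rho> * exp (\<i> * s))))\<bar> \<le> K * pi"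
    if st: "s \<le> t" "t - s < pi" for s t
  proof -
    define W where "W = ball 0 R \<inter> {w. inner (exp (\<i> * of_real ((s+t)/2))) w > 0}"
    have Wsub: "W \<subseteq> ball 0 R - {0}" by (auto simp: W_def)
    have cW: "convex W" unfolding W_def by (intro convex_Int convex_ball convex_halfspace_gt)
    have oW: "open W" unfolding W_def by (intro open_Int open_ball open_halfspace_gt)
    have img: "path_image (part_circlepath 0 \<rho> s t) \<subseteq> W"
      unfolding W_def by (rule arc_in_halfplane[OF rho st])
    have "\<bar>ln (norm (B (\<rho> * exp (\<i> * t)))) - ln (norm (B (\<rho> * exp (\<i> * s))))\<bar> \<le> (K / \<rho>) * \<rho> * (t - s)"
    proof (rule arc_log_bound[OF cW oW holomorphic_on_subset[OF Bhol Wsub] _ rho(1) st(1) img])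
      show "B w \<noteq> 0" if "w \<in> W" for w using Bnz Wsub that by blast
      fix w assume w: "w \<in> path_image (part_circlepath 0 \<rho> s t)"
      have "norm w = \<rho>" using in_path_image_part_circlepath[OF w st(1)] rho by simp
      moreover have "w \<in> ball 0 R - {0}" using img Wsub w by blast
      ultimately show "norm (deriv B w / B w) \<le> K / \<rho>" using K[of w] by simp
    qed (use K0 rho in auto)
    also have "\<dots> \<le> K * pi" using rho st K0 by (simp add: mult_left_mono)
    finally show ?thesis .
  qed
  have base: "ln (norm (B (\<rho> * exp (\<i> * 0)))) = 0" using Breal[of "of_real \<rho>"] rho by simp
  have "\<bar>ln (norm (B z))\<bar> \<le> K * pi"
  proof (cases "\<theta> = pi")
    case True
    hence "z \<in> \<real>" using Arg_eq_pi_iff \<theta>_def by auto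
    thus ?thesis using Breal z K0 by simp
  next
    case False
    hence th: "-pi < \<theta>" "\<theta> < pi" using mpi_less_Arg Arg_le_pi \<theta>_def by (auto simp: less_le)
    show ?thesis
    proof (cases "\<theta> \<ge> 0")
      case True
      thus ?thesis using main[of 0 \<theta>] th base zeq by simp
    next
      case False
      thus ?thesis using main[of \<theta> 0] th base zeq by (simp add: abs_minus_commute)
    qed
  qed
  hence "ln (norm (B z)) \<le> K * pi" by simp
  moreover have "norm (B z) > 0" using Bnz z by simp
  ultimately show ?thesis by (metis exp_ln exp_le_cancel_iff)
qed

lemma reflect_lemma:
  fixes B :: "complex \<Rightarrow> complex"
  assumes r: "r > 0" and Bhol: "B holomorphic_on ball 0 r - {0}"
    and Bnz: "\<And>z. z \<in> ball 0 r - {0} \<Longrightarrow> B z \<noteq> 0"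
    and Breal: "\<And>x. x \<in> ball 0 r - {0} \<Longrightarrow> x \<in> \<real> \<Longrightarrow> norm (B x) = 1"
    and z: "z \<in> ball 0 r - {0}"
  shows "norm (deriv B (cnj z) / B (cnj z)) = norm (deriv B z / B z)"
proof -
  define S where "S = ball (0::complex) r - {0}"
  have oS: "open S" and cS: "connected S" unfolding S_def by (auto intro: connected_open_delete)
  have cnjS: "cnj ` S = S"
  proof -
    have "cnj w \<in> S" if "w \<in> S" for w using that by (simp add: S_def)
    hence "cnj ` S \<subseteq> S" by auto
    moreover have "S \<subseteq> cnj ` S" using \<open>\<And>w. w \<in> S \<Longrightarrow> cnj w \<in> S\<close> by (force intro: image_eqI[where x="cnj _"])
    ultimately show ?thesis by blast
  qed
  have BholS: "B holomorphic_on S" using Bhol by (simp add: S_def)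
  have Bchol: "(cnj \<circ> B \<circ> cnj) holomorphic_on S"
    by (rule holomorphic_on_compose_cnj_cnj) (use BholS cnjS oS in auto)
  have prod: "B w * cnj (B (cnj w)) = 1" if w: "w \<in> S" for w
  proof -
    have "(\<lambda>w. B w * (cnj \<circ> B \<circ> cnj) w - 1) w = 0"
    proof (rule analytic_continuation[OF _ oS cS, where U="{x. x \<in> S \<and> x \<in> \<real>}" and \<xi>="complex_of_real (r/2)" and f="\<lambda>w. B w * (cnj \<circ> B \<circ> cnj) w - 1"])
      show "(\<lambda>w. B w * (cnj \<circ> B \<circ> cnj) w - 1) holomorphic_on S"
        by (intro holomorphic_intros BholS Bchol)
      show "complex_of_real (r/2) \<in> S" using r by (simp add: S_def)
      show "complex_of_real (r/2) islimpt {x. x \<in> S \<and> x \<in> \<real>}"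
      proof (rule islimptI)
        fix T assume T: "complex_of_real (r/2) \<in> T" "open T"
        then obtain e where e: "e > 0" "ball (complex_of_real (r/2)) e \<subseteq> T" using open_contains_ball by blast
        define a where "a = r/2 + min e (r/2) / 2"
        have a: "0 < a" "a < r" "\<bar>a - r/2\<bar> < e" "a \<noteq> r/2" using e r by (auto simp: a_def min_def)
        define y where "y = complex_of_real a"
        have "dist (complex_of_real (r/2)) y < e" using a unfolding y_def dist_norm
          by (metis norm_of_real of_real_diff abs_minus_commute)
        hence "y \<in> T" using e(2) by auto
        moreover have "y \<in> S" using a by (auto simp: y_def S_def)
        moreover have "y \<noteq> complex_of_real (r/2)" using a unfolding y_def of_real_eq_iff by simp
        ultimately show "\<exists>y\<in>{x. x \<in> S \<and> x \<in> \<real>}. y \<in> T \<and> y \<noteq> complex_of_real (r/2)"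
          by (auto simp: y_def)
      qed
      fix x assume "x \<in> {x. x \<in> S \<and> x \<in> \<real>}"
      hence x: "x \<in> S" "x \<in> \<real>" by auto
      have "cnj x = x" using x(2) by (simp add: Reals_cnj_iff)
      hence "B x * (cnj \<circ> B \<circ> cnj) x = of_real (norm (B x))^2" using complex_norm_square[of "B x"] by simp
      thus "B x * (cnj \<circ> B \<circ> cnj) x - 1 = 0" using Breal[of x] x by (simp add: S_def)
    qed (use w in auto)
    thus ?thesis by simp
  qed
  have zS: "z \<in> S" using z by (simp add: S_def)
  have czS: "cnj z \<in> S" using zS cnjS by auto
  have d1: "((cnj \<circ> B \<circ> cnj) has_field_derivative cnj (deriv B (cnj z))) (at z)"
    by (rule has_field_derivative_cnj_cnj) (rule holomorphic_derivI[OF BholS oS czS])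
  have d2: "((cnj \<circ> B \<circ> cnj) has_field_derivative - deriv B z / (B z)^2) (at z)"
  proof -
    have "((\<lambda>w. 1 / B w) has_field_derivative - deriv B z / (B z)^2) (at z)"
      using holomorphic_derivI[OF BholS oS zS] Bnz[of z] z
      by (auto intro!: derivative_eq_intros simp: power2_eq_square)
    thus ?thesis
      by (rule has_field_derivative_transform_within_open[OF _ oS zS])
         (use prod Bnz in \<open>auto simp: S_def field_simps\<close>)
  qed
  have e1: "cnj (deriv B (cnj z)) = - deriv B z / (B z)^2"
    using DERIV_unique[OF d1 d2] .
  have e2: "cnj (B (cnj z)) = 1 / B z" using prod[OF zS] Bnz[of z] z by (simp add: field_simps)
  have "norm (deriv B (cnj z) / B (cnj z)) = norm (cnj (deriv B (cnj z)) / cnj (B (cnj z)))"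
    by (simp add: norm_divide)
  also have "\<dots> = norm (deriv B z / B z)"
    using Bnz[of z] z by (simp add: e1 e2 norm_divide norm_power power2_eq_square)
  finally show ?thesis .
qed

lemma upper_bound:
  fixes \<phi> B g :: "complex \<Rightarrow> complex" and n :: int and r Cg :: real
  defines "U \<equiv> {z. Im z > 0} \<inter> ball 0 r"
  assumes r: "r > 0" and phol: "\<phi> holomorphic_on U" and pinj: "inj_on \<phi> U"
    and Bhol: "B holomorphic_on ball 0 r - {0}" and Bnz: "\<And>z. z \<in> ball 0 r - {0} \<Longrightarrow> B z \<noteq> 0"
    and ghol: "g holomorphic_on ball 0 r" and gnz: "\<And>z. z \<in> ball 0 r \<Longrightarrow> g z \<noteq> 0"
    and dphi: "\<And>z. z \<in> U \<Longrightarrow> deriv \<phi> z = B z * g z * z powi n"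
    and Cg: "\<And>z. z \<in> ball 0 r \<Longrightarrow> norm (deriv g z / g z) \<le> Cg" and Cg0: "Cg \<ge> 0"
    and z: "z \<in> U" "norm z \<le> r/2"
  shows "norm (deriv B z / B z) \<le> UC / Im z + (UC + Cg * r + \<bar>of_int n\<bar>) / norm z"
proof -
  have oU: "open U" unfolding U_def by (intro open_Int open_ball open_halfspace_Im_gt)
  have zU: "z \<in> U" by fact
  have imz: "Im z > 0" and zr: "norm z < r" using z by (auto simp: U_def)
  have z0: "z \<noteq> 0" using imz by auto
  have nz: "norm z > 0" using z0 by simp
  have zS: "z \<in> ball 0 r - {0}" using zr z0 by simp
  define d where "d = min (Im z) (r/2)"
  have d: "d > 0" using imz r by (simp add: d_def)
  have bsub: "ball z d \<subseteq> U"
  proof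
    fix w assume "w \<in> ball z d"
    hence wd: "norm (w - z) < d" by (simp add: dist_norm norm_minus_commute)
    have "\<bar>Im (w - z)\<bar> \<le> norm (w - z)" by (rule abs_Im_le_cmod)
    hence "Im w > 0" using wd by (simp add: d_def) linarith
    moreover have "norm w \<le> norm z + norm (w - z)" by (rule norm_triangle_sub)
    hence "norm w < r" using wd z(2) by (simp add: d_def)
    ultimately show "w \<in> U" by (simp add: U_def)
  qed
  have pre: "norm (deriv (deriv \<phi>) z) \<le> UC / d * norm (deriv \<phi> z)"
    by (rule univ_preschwarz[OF holomorphic_on_subset[OF phol bsub] inj_on_subset[OF pinj bsub] d])
  have dB: "(B has_field_derivative deriv B z) (at z)"
    by (rule holomorphic_derivI[OF Bhol _ zS]) auto
  have dg: "(g has_field_derivative deriv g z) (at z)"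
    by (rule holomorphic_derivI[OF ghol _]) (use zr in auto)
  define P where "P = z powi n"
  have Pnz: "P \<noteq> 0" using z0 by (simp add: P_def)
  have dP: "((\<lambda>w. w powi n) has_field_derivative of_int n * P / z) (at z)"
  proof -
    have "((\<lambda>w. w powi n) has_field_derivative of_int n * z powi (n - 1) * 1) (at z)"
      by (rule DERIV_power_int[OF DERIV_ident]) (use z0 in auto)
    thus ?thesis using z0 by (simp add: power_int_diff P_def)
  qed
  have dprod: "((\<lambda>w. B w * g w * w powi n) has_field_derivative
      (deriv B z * g z + B z * deriv g z) * P + B z * g z * (of_int n * P / z)) (at z)"
    using DERIV_mult[OF DERIV_mult[OF dB dg] dP] by (simp add: P_def algebra_simps)
  have ev: "eventually (\<lambda>w. deriv \<phi> w = B w * g w * w powi n) (nhds z)"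
    using eventually_nhds_in_open[OF oU zU] by (rule eventually_mono) (use dphi in auto)
  have dd: "deriv (deriv \<phi>) z = (deriv B z * g z + B z * deriv g z) * P + B z * g z * (of_int n * P / z)"
    using deriv_cong_ev[OF ev refl] DERIV_imp_deriv[OF dprod] by simp
  have Bz: "B z \<noteq> 0" using Bnz zS by blast
  have gz: "g z \<noteq> 0" using gnz zr by simp
  have d1: "deriv \<phi> z = B z * g z * P" using dphi[OF zU] by (simp add: P_def)
  have r1: "deriv (deriv \<phi>) z / deriv \<phi> z = deriv B z / B z + deriv g z / g z + of_int n / z"
    unfolding dd d1 using Bz gz Pnz z0 by (simp add: divide_simps) (simp add: algebra_simps)
  have ratio: "deriv B z / B z = deriv (deriv \<phi>) z / deriv \<phi> z - deriv g z / g z - of_int n / z"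
    unfolding r1 by simp
  have "norm (deriv B z / B z) \<le> norm (deriv (deriv \<phi>) z / deriv \<phi> z) + norm (deriv g z / g z) + norm (of_int n / z)"
    unfolding ratio using norm_triangle_ineq4[of "deriv (deriv \<phi>) z / deriv \<phi> z - deriv g z / g z" "of_int n / z"]
      norm_triangle_ineq4[of "deriv (deriv \<phi>) z / deriv \<phi> z" "deriv g z / g z"] by linarith
  also have "norm (deriv (deriv \<phi>) z / deriv \<phi> z) \<le> UC / d"
    using pre Bz gz Pnz by (simp add: d1 norm_divide norm_mult divide_le_eq)
  also have "UC / d \<le> UC / Im z + UC / norm z"
  proof (cases "Im z \<le> r/2")
    case True thus ?thesis using UC_pos nz by (simp add: d_def)
  next
    case False
    hence "d = r/2" by (simp add: d_def)
    hence "UC / d \<le> UC / norm z" using UC_pos nz z(2) by (simp add: frac_le)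
    moreover have "UC / Im z > 0" using UC_pos imz by simp
    ultimately show ?thesis by linarith
  qed
  also have "norm (deriv g z / g z) \<le> Cg * r / norm z"
  proof -
    have "Cg * norm z \<le> Cg * r" by (rule mult_left_mono) (use zr Cg0 in auto)
    hence "Cg \<le> Cg * r / norm z" using nz by (simp add: le_divide_eq)
    thus ?thesis using Cg[of z] zr by simp
  qed
  also have "norm (of_int n / z) = \<bar>of_int n\<bar> / norm z" by (simp add: norm_divide)
  finally show ?thesis by (simp add: add_divide_distrib)
qed

lemma ball_sub_punct: "a \<le> b \<Longrightarrow> ball (0::complex) a - {0} \<subseteq> ball 0 b - {0}"
  by auto

theorem lemma3:
  fixes V :: "complex set" and h B \<phi> :: "complex \<Rightarrow> complex"
  assumes "open V" and "0 \<in> V"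
    and "h meromorphic_on V"
    and "B holomorphic_on (V - {0})"
    and "\<forall>z\<in>V - {0}. B z \<noteq> 0"
    and "\<forall>z\<in>V - {0}. z \<in> \<real> \<longrightarrow> norm (B z) = 1"
    and "\<phi> holomorphic_on {z\<in>V. Im z > 0}"
    and "inj_on \<phi> {z\<in>V. Im z > 0}"
    and "\<forall>z\<in>{z\<in>V. Im z > 0}. h analytic_on {z} \<longrightarrow> deriv \<phi> z = B z * h z"
  shows "\<exists>c. (B \<longlongrightarrow> c) (at 0)"
proof -
  note oV = assms(1) and V0 = assms(2) and hmer = assms(3) and BholV = assms(4)
    and BnzV = assms(5) and BrealV = assms(6) and pholV = assms(7) and pinjV = assms(8) and dphiV = assms(9)
  have hm0: "h meromorphic_on {0}" using meromorphic_on_subset[OF hmer] V0 by blast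
  have iso: "isolated_singularity_at h 0" by (rule meromorphic_on_isolated_singularity[OF hm0])
  have ness: "not_essential h 0" by (rule meromorphic_on_not_essential[OF hm0])
  obtain r0 where r0: "r0 > 0" "ball 0 r0 \<subseteq> V" using oV V0 open_contains_ball by blast
  have freq: "\<exists>\<^sub>F w in at 0. h w \<noteq> 0"
  proof (rule ccontr)
    assume "\<not> (\<exists>\<^sub>F w in at 0. h w \<noteq> 0)"
    hence "\<forall>\<^sub>F w in at 0. h w = 0" by (simp add: not_frequently)
    then obtain r1 where r1: "r1 > 0" "\<And>w. w \<noteq> 0 \<Longrightarrow> dist w 0 < r1 \<Longrightarrow> h w = 0"
      unfolding eventually_at by auto
    define s where "s = min r0 r1"
    have s: "s > 0" using r0 r1 by (simp add: s_def)
    define c where "c = \<i> * of_real (s/2)"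
    define W where "W = ball c (s/4)"
    have Wprop: "Im w > s / 4 \<and> norm w < 3 * s / 4" if "w \<in> W" for w
    proof -
      have wd: "norm (w - c) < s/4" using that by (simp add: W_def dist_norm norm_minus_commute)
      have "\<bar>Im (w - c)\<bar> \<le> norm (w - c)" by (rule abs_Im_le_cmod)
      hence "Im w > s/4" using wd by (simp add: c_def)
      moreover have "norm w \<le> norm c + norm (w - c)" by (rule norm_triangle_sub)
      hence "norm w < 3 * s / 4" using wd s by (simp add: c_def norm_mult)
      ultimately show ?thesis by simp
    qed
    have WU: "W \<subseteq> {z\<in>V. Im z > 0}"
    proof
      fix w assume "w \<in> W"
      hence "Im w > 0" "norm w < r0" using Wprop[of w] s by (auto simp: s_def)
      thus "w \<in> {z\<in>V. Im z > 0}" using r0 by auto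
    qed
    have dz: "deriv \<phi> w = 0" if w: "w \<in> W" for w
    proof -
      have "h holomorphic_on ball w (s/4)"
      proof (rule holomorphic_transform[of "\<lambda>_. 0"])
        fix x assume x: "x \<in> ball w (s/4)"
        have "norm (x - w) < s/4" using x by (simp add: dist_norm norm_minus_commute)
        moreover have "\<bar>Im (x - w)\<bar> \<le> norm (x - w)" by (rule abs_Im_le_cmod)
        moreover have "norm x \<le> norm w + norm (x - w)" by (rule norm_triangle_sub)
        ultimately have "Im x > 0" "norm x < s" using Wprop[OF w] by auto
        hence "x \<noteq> 0" "dist x 0 < r1" by (auto simp: s_def)
        thus "0 = h x" using r1(2) by simp
      qed auto
      hence "h analytic_on {w}" using s unfolding analytic_on_def by (intro ballI exI[of _ "s/4"]) auto
      moreover have "h w = 0"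
      proof -
        have "Im w > 0" "norm w < s" using Wprop[OF w] s by auto
        moreover have "w \<noteq> 0" using \<open>Im w > 0\<close> by auto
        ultimately show ?thesis using r1(2)[of w] by (auto simp: s_def dist_norm)
      qed
      ultimately show ?thesis using dphiV WU w by auto
    qed
    have "\<exists>k. \<forall>x\<in>W. \<phi> x = k"
    proof (rule has_field_derivative_zero_constant)
      show "convex W" by (simp add: W_def)
      fix x assume x: "x \<in> W"
      have "(\<phi> has_field_derivative deriv \<phi> x) (at x within W)"
        by (rule holomorphic_derivI[OF holomorphic_on_subset[OF pholV WU] _ x]) (simp add: W_def)
      thus "(\<phi> has_field_derivative 0) (at x within W)" using dz[OF x] by simp
    qed
    then obtain k where k: "\<And>x. x \<in> W \<Longrightarrow> \<phi> x = k" by blast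
    have c1: "c \<in> W" using s by (simp add: W_def)
    have c2: "c + of_real (s/8) \<in> W" using s by (simp add: W_def dist_norm)
    have "c = c + of_real (s/8)"
      using inj_onD[OF pinjV, of c "c + of_real (s/8)"] k[OF c1] k[OF c2] WU c1 c2 by auto
    thus False using s by simp
  qed
  obtain g0 r1 where g0: "g0 0 \<noteq> 0" "r1 > 0" "g0 holomorphic_on cball 0 r1"
    "\<And>w. w \<in> cball 0 r1 - {0} \<Longrightarrow> h w = g0 w * w powi (zorder h 0) \<and> g0 w \<noteq> 0"
    using zorder_exist[OF iso ness freq] by auto
  define n where "n = zorder h 0"
  define r where "r = min r0 r1 / 2"
  have r: "r > 0" "r < r1" "ball 0 r \<subseteq> V" using r0 g0(2) by (auto simp: r_def)
  have g0b: "g0 holomorphic_on ball 0 r1" using g0(3) by (rule holomorphic_on_subset) auto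
  have gnz: "g0 w \<noteq> 0" if "w \<in> ball 0 r" for w
    using g0(1) g0(4)[of w] that r by (cases "w = 0") auto
  have ghol: "g0 holomorphic_on ball 0 r" using g0b by (rule holomorphic_on_subset) (use r in auto)
  obtain Cg where Cg: "Cg > 0" "\<And>w. w \<in> cball 0 r \<Longrightarrow> norm (deriv g0 w / g0 w) \<le> Cg"
  proof -
    have c1: "continuous_on (cball 0 r) (deriv g0)"
      by (intro holomorphic_on_imp_continuous_on holomorphic_on_subset[OF holomorphic_deriv[OF g0b open_ball]])
         (use r in auto)
    have c2: "continuous_on (cball 0 r) g0"
      by (intro holomorphic_on_imp_continuous_on holomorphic_on_subset[OF g0b]) (use r in auto)
    have c3: "\<forall>w\<in>cball 0 r. g0 w \<noteq> 0"
      using g0(1) g0(4) r by (metis Diff_iff empty_iff insert_iff less_le_not_le mem_cball_0 order.trans)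
    have "continuous_on (cball 0 r) (\<lambda>w. deriv g0 w / g0 w)"
      by (rule continuous_on_divide[OF c1 c2 c3])
    hence "bounded ((\<lambda>w. deriv g0 w / g0 w) ` cball 0 r)"
      by (intro compact_imp_bounded compact_continuous_image) auto
    thus ?thesis using that unfolding bounded_pos by auto
  qed
  have hS: "h w = g0 w * w powi n" if "w \<in> ball 0 r - {0}" for w
    using g0(4)[of w] that r by (auto simp: n_def)
  have hhol: "h holomorphic_on ball 0 r - {0}"
    by (rule holomorphic_transform[of "\<lambda>w. g0 w * w powi n"])
       (auto intro!: holomorphic_intros holomorphic_on_subset[OF ghol] simp: hS)
  have han: "h analytic_on {w}" if "w \<in> ball 0 r - {0}" for w
    using hhol that analytic_on_open[of "ball 0 r - {0}" h] analytic_on_subset by blast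
  define U where "U = {z. Im z > 0} \<inter> ball 0 r"
  have UV: "U \<subseteq> {z\<in>V. Im z > 0}" using r by (auto simp: U_def)
  have dphi: "deriv \<phi> z = B z * g0 z * z powi n" if "z \<in> U" for z
  proof -
    have zS: "z \<in> ball 0 r - {0}" using that by (auto simp: U_def)
    thus ?thesis using dphiV han[OF zS] UV that hS[OF zS] by auto
  qed
  have Bhol: "B holomorphic_on ball 0 r - {0}" using r by (intro holomorphic_on_subset[OF BholV]) auto
  have Bnz: "B z \<noteq> 0" if "z \<in> ball 0 r - {0}" for z using BnzV r that by auto
  have Breal: "norm (B x) = 1" if "x \<in> ball 0 r - {0}" "x \<in> \<real>" for x using BrealV r that by auto
  define K1 where "K1 = UC + Cg * r + \<bar>of_int n\<bar>"
  have K1: "K1 \<ge> 0" using UC_pos Cg r by (simp add: K1_def)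
  have up: "norm (deriv B z / B z) \<le> UC / Im z + K1 / norm z" if "z \<in> U" "norm z \<le> r/2" for z
    unfolding K1_def
    by (rule upper_bound[OF r(1) _ _ Bhol Bnz ghol gnz _ _ _ _ that(2), unfolded U_def[symmetric]])
       (use holomorphic_on_subset[OF pholV UV] inj_on_subset[OF pinjV UV] dphi Cg that in auto)
  have full: "norm (deriv B \<zeta> / B \<zeta>) \<le> UC / \<bar>Im \<zeta>\<bar> + K1 / norm \<zeta>"
    if \<zeta>: "\<zeta> \<in> ball 0 (r/2) - {0}" "Im \<zeta> \<noteq> 0" for \<zeta>
  proof (cases "Im \<zeta> > 0")
    case True
    hence "\<zeta> \<in> U" using \<zeta> r by (auto simp: U_def)
    thus ?thesis using up[of \<zeta>] True \<zeta> by simp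
  next
    case False
    hence im: "Im \<zeta> < 0" using \<zeta> by simp
    have cU: "cnj \<zeta> \<in> U" using \<zeta> im r by (auto simp: U_def)
    have cS: "cnj \<zeta> \<in> ball 0 r - {0}" using \<zeta> r by auto
    have "norm (deriv B \<zeta> / B \<zeta>) = norm (deriv B (cnj \<zeta>) / B (cnj \<zeta>))"
      using reflect_lemma[OF r(1) Bhol Bnz Breal cS] by simp
    also have "\<dots> \<le> UC / Im (cnj \<zeta>) + K1 / norm (cnj \<zeta>)" using up[OF cU] \<zeta> by simp
    finally show ?thesis using im by simp
  qed
  have Fhol: "(\<lambda>z. deriv B z / B z) holomorphic_on ball 0 (r/2) - {0}"
  proof -
    have "(\<lambda>z. deriv B z / B z) holomorphic_on ball 0 r - {0}"
      by (intro holomorphic_intros holomorphic_deriv Bhol) (auto simp: Bnz)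
    moreover have "ball 0 (r/2) - {0} \<subseteq> ball (0::complex) r - {0}" using r by auto
    ultimately show ?thesis by (rule holomorphic_on_subset)
  qed
  define K where "K = 15 * (UC + K1)"
  have K0: "K \<ge> 0" using UC_pos K1 by (simp add: K_def)
  have kb: "norm (deriv B z / B z) \<le> K / norm z" if "z \<in> ball 0 (r/4) - {0}" for z
    unfolding K_def
    by (rule kernel_bound[where F="\<lambda>z. deriv B z / B z", OF Fhol full]) (use that UC_pos K1 in auto)
  have Bhol4: "B holomorphic_on ball 0 (r/4) - {0}" using r by (intro holomorphic_on_subset[OF Bhol] ball_sub_punct) auto
  have sub4: "ball 0 (r/4) - {0} \<subseteq> ball (0::complex) r - {0}" using r by (intro ball_sub_punct) auto
  have bnd: "norm (B z) \<le> exp (K * pi)" if "z \<in> ball 0 (r/4) - {0}" for z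
    by (rule bounded_from_logderiv[OF _ Bhol4 _ _ kb K0 that]) (use r sub4 Bnz Breal in auto)
  have "\<exists>G. G holomorphic_on ball 0 (r/4) \<and> (\<forall>z\<in>ball 0 (r/4) - {0}. G z = B z)"
  proof (subst holomorphic_on_extend_bounded)
    show "B holomorphic_on ball 0 (r/4) - {0}" using r by (intro holomorphic_on_subset[OF Bhol] ball_sub_punct) auto
    show "0 \<in> interior (ball (0::complex) (r/4))" using r by simp
    show "\<exists>Bd. \<forall>\<^sub>F z in at 0. norm (B z) \<le> Bd"
    proof (intro exI)
      show "\<forall>\<^sub>F z in at 0. norm (B z) \<le> exp (K * pi)"
        unfolding eventually_at using r bnd by (intro exI[of _ "r/4"]) (auto simp: dist_norm)
    qed
  qed
  then obtain G where G: "G holomorphic_on ball 0 (r/4)" "\<And>z. z \<in> ball 0 (r/4) - {0} \<Longrightarrow> G z = B z"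
    by blast
  have "continuous (at 0) G"
    using continuous_on_interior[OF holomorphic_on_imp_continuous_on[OF G(1)]] r by simp
  hence "(G \<longlongrightarrow> G 0) (at 0)" by (simp add: continuous_at)
  moreover have "\<forall>\<^sub>F z in at 0. G z = B z"
    unfolding eventually_at using r G(2) by (intro exI[of _ "r/4"]) (auto simp: dist_norm)
  ultimately have "(B \<longlongrightarrow> G 0) (at 0)" by (rule Lim_transform_eventually)
  thus ?thesis by blast
qed

end
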